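(* Let $f\colon X\to Y$ be a continuous function between compact Hausdorff spaces. (1) For every $V\in\mathsf{RO}(Y)$, $\mathrm{int}(\mathrm{cl}(f^{-1}[V]))=\bigvee\{U\in\mathsf{RO}(X)\mid f[\mathrm{cl}(U)]\subseteq V\}$, the join computed in $\mathsf{RO}(X)$. (2) For every $U\in\mathsf{RO}(X)$ and $V\in\mathsf{RO}(Y)$, $f[\mathrm{cl}(U)]\subseteq V$ if and only if there is $V'\in\mathsf{RO}(Y)$ with $\mathrm{cl}(V')\subseteq V$ and $U\subseteq\mathrm{int}(\mathrm{cl}(f^{-1}[V']))$.
   Context: $\mathsf{RO}(X)$ denotes the complete boolean algebra of regular open subsets of $X$ (sets $U$ with $U=\mathrm{int}(\mathrm{cl}(U))$), with joins $\bigvee_i U_i=\mathrm{int}(\mathrm{cl}(\bigcup_i U_i))$. *)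

theory Defs
  imports "HOL-Analysis.Analysis"
begin

definition regular_open :: "'a topology \<Rightarrow> 'a set \<Rightarrow> bool" where
  "regular_open X U \<longleftrightarrow> X interior_of (X closure_of U) = U"

definition ro_join :: "'a topology \<Rightarrow> 'a set set \<Rightarrow> 'a set" where
  "ro_join X \<U> = X interior_of (X closure_of (\<Union>\<U>))"

end

theory Submission
  imports Defs
begin

lemma open_sub_intcl:
  assumes "openin X W" shows "W \<subseteq> X interior_of (X closure_of W)"
  by (meson assms closure_of_subset interior_of_maximal openin_subset)

lemma cl_intcl_open:
  assumes "openin X W"
  shows "X closure_of (X interior_of (X closure_of W)) = X closure_of W"
proof
  show "X closure_of (X interior_of (X closure_of W)) \<subseteq> X closure_of W"
    by (metis closedin_closure_of closure_of_minimal interior_of_subset)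
  show "X closure_of W \<subseteq> X closure_of (X interior_of (X closure_of W))"
    by (simp add: assms closure_of_mono open_sub_intcl)
qed

lemma ro_intcl_open:
  assumes "openin X W"
  shows "regular_open X (X interior_of (X closure_of W))"
  unfolding regular_open_def using cl_intcl_open[OF assms] by simp

lemma ro_open: "regular_open X U \<Longrightarrow> openin X U"
  unfolding regular_open_def by (metis openin_interior_of)

theorem proposition6p12:
  fixes X :: "'a topology" and Y :: "'b topology" and f :: "'a \<Rightarrow> 'b"
  assumes "compact_space X" and "Hausdorff_space X"
    and "compact_space Y" and "Hausdorff_space Y"
    and "continuous_map X Y f"
  shows "(\<forall>V. regular_open Y V \<longrightarrow>
            X interior_of (X closure_of (topspace X \<inter> f -` V))
              = ro_join X {U. regular_open X U \<and> f ` (X closure_of U) \<subseteq> V})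
       \<and> (\<forall>U V. regular_open X U \<longrightarrow> regular_open Y V \<longrightarrow>
            (f ` (X closure_of U) \<subseteq> V \<longleftrightarrow>
              (\<exists>V'. regular_open Y V' \<and> Y closure_of V' \<subseteq> V \<and>
                    U \<subseteq> X interior_of (X closure_of (topspace X \<inter> f -` V')))))"
proof (intro conjI allI impI)
  have nX: "normal_space X" and nY: "normal_space Y"
    using compact_Hausdorff_or_regular_imp_normal_space assms(1,2,3,4) by auto
  have pre_open: "openin X (topspace X \<inter> f -` V)" if "openin Y V" for V
  proof -
    have "openin X {x \<in> topspace X. f x \<in> V}"
      using openin_continuous_map_preimage[OF assms(5) that] .
    moreover have "{x \<in> topspace X. f x \<in> V} = topspace X \<inter> f -` V" by auto
    ultimately show ?thesis by simp
  qed
  fix V assume V: "regular_open Y V"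
  have oV: "openin Y V" using V ro_open by blast
  define P where "P = topspace X \<inter> f -` V"
  have oP: "openin X P" unfolding P_def using pre_open oV .
  have "\<Union>{U. regular_open X U \<and> f ` (X closure_of U) \<subseteq> V} = P"
  proof
    show "\<Union>{U. regular_open X U \<and> f ` (X closure_of U) \<subseteq> V} \<subseteq> P"
    proof
      fix x assume "x \<in> \<Union>{U. regular_open X U \<and> f ` (X closure_of U) \<subseteq> V}"
      then obtain U where U: "regular_open X U" "f ` (X closure_of U) \<subseteq> V" "x \<in> U" by blast
      have "x \<in> X closure_of U"
        using U(3) closure_of_subset[OF openin_subset[OF ro_open[OF U(1)]]] by blast
      moreover have "x \<in> topspace X" using U(3) openin_subset[OF ro_open[OF U(1)]] by blast
      ultimately show "x \<in> P" unfolding P_def using U(2) by blast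
    qed
    show "P \<subseteq> \<Union>{U. regular_open X U \<and> f ` (X closure_of U) \<subseteq> V}"
    proof
      fix x assume x: "x \<in> P"
      have xt: "x \<in> topspace X" using x P_def by blast
      have "closedin X {x}"
        by (rule closedin_t1_singleton[OF Hausdorff_imp_t1_space[OF assms(2)] xt])
      moreover have "{x} \<subseteq> P" using x by blast
      ultimately obtain W where W: "openin X W" "{x} \<subseteq> W" "X closure_of W \<subseteq> P"
        using normal_space_alt[THEN iffD1, OF nX, rule_format, of "{x}" P] oP by blast
      let ?U = "X interior_of (X closure_of W)"
      have "regular_open X ?U" using ro_intcl_open W(1) .
      moreover have "f ` (X closure_of ?U) \<subseteq> V"
      proof -
        have "X closure_of ?U = X closure_of W" by (rule cl_intcl_open[OF W(1)])
        then show ?thesis using W(3) unfolding P_def by auto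
      qed
      moreover have "x \<in> ?U" using W open_sub_intcl by blast
      ultimately show "x \<in> \<Union>{U. regular_open X U \<and> f ` (X closure_of U) \<subseteq> V}" by blast
    qed
  qed
  then show "X interior_of (X closure_of (topspace X \<inter> f -` V))
              = ro_join X {U. regular_open X U \<and> f ` (X closure_of U) \<subseteq> V}"
    unfolding ro_join_def P_def by simp
next
  have nX: "normal_space X" and nY: "normal_space Y"
    using compact_Hausdorff_or_regular_imp_normal_space assms(1,2,3,4) by auto
  have pre_open: "openin X (topspace X \<inter> f -` V)" if "openin Y V" for V
  proof -
    have "openin X {x \<in> topspace X. f x \<in> V}"
      using openin_continuous_map_preimage[OF assms(5) that] .
    moreover have "{x \<in> topspace X. f x \<in> V} = topspace X \<inter> f -` V" by auto
    ultimately show ?thesis by simp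
  qed
  fix U V assume U: "regular_open X U" and V: "regular_open Y V"
  have oV: "openin Y V" using V ro_open by blast
  show "f ` (X closure_of U) \<subseteq> V \<longleftrightarrow>
              (\<exists>V'. regular_open Y V' \<and> Y closure_of V' \<subseteq> V \<and>
                    U \<subseteq> X interior_of (X closure_of (topspace X \<inter> f -` V')))"
  proof
    assume H: "f ` (X closure_of U) \<subseteq> V"
    have "compactin X (X closure_of U)"
      by (rule closedin_compact_space[OF assms(1) closedin_closure_of])
    then have "compactin Y (f ` (X closure_of U))"
      by (rule image_compactin[OF _ assms(5)])
    then have "closedin Y (f ` (X closure_of U))"
      by (rule compactin_imp_closedin[OF assms(4)])
    then obtain W where W: "openin Y W" "f ` (X closure_of U) \<subseteq> W" "Y closure_of W \<subseteq> V"
      using normal_space_alt[THEN iffD1, OF nY, rule_format, of "f ` (X closure_of U)" V] oV H by blast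
    let ?V' = "Y interior_of (Y closure_of W)"
    have "regular_open Y ?V'" using ro_intcl_open W(1) .
    moreover have "Y closure_of ?V' \<subseteq> V" by (simp add: cl_intcl_open[OF W(1)] W(3))
    moreover have "U \<subseteq> X interior_of (X closure_of (topspace X \<inter> f -` ?V'))"
    proof -
      have Ut: "U \<subseteq> topspace X" using ro_open[OF U] openin_subset by blast
      have "U \<subseteq> X closure_of U" using closure_of_subset[OF Ut] .
      then have "f ` U \<subseteq> f ` (X closure_of U)" by (rule image_mono)
      also have "\<dots> \<subseteq> W" by (rule W(2))
      also have "\<dots> \<subseteq> ?V'" by (rule open_sub_intcl[OF W(1)])
      finally have fU: "f ` U \<subseteq> ?V'" .
      have "U \<subseteq> topspace X \<inter> f -` ?V'"
      proof
        fix x assume "x \<in> U" then show "x \<in> topspace X \<inter> f -` ?V'" using Ut fU by blast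
      qed
      have "openin X (topspace X \<inter> f -` ?V')"
        by (rule pre_open) (rule openin_interior_of)
      then have "topspace X \<inter> f -` ?V' \<subseteq> X interior_of (X closure_of (topspace X \<inter> f -` ?V'))"
        by (rule open_sub_intcl)
      with \<open>U \<subseteq> topspace X \<inter> f -` ?V'\<close> show ?thesis by (rule order_trans)
    qed
    ultimately show "\<exists>V'. regular_open Y V' \<and> Y closure_of V' \<subseteq> V \<and>
                    U \<subseteq> X interior_of (X closure_of (topspace X \<inter> f -` V'))" by blast
  next
    assume "\<exists>V'. regular_open Y V' \<and> Y closure_of V' \<subseteq> V \<and>
                    U \<subseteq> X interior_of (X closure_of (topspace X \<inter> f -` V'))"
    then obtain V' where V': "Y closure_of V' \<subseteq> V"
      "U \<subseteq> X interior_of (X closure_of (topspace X \<inter> f -` V'))" by blast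
    have C: "closedin X {x \<in> topspace X. f x \<in> Y closure_of V'}"
      by (rule closedin_continuous_map_preimage[OF assms(5) closedin_closure_of])
    have "topspace X \<inter> f -` V' \<subseteq> {x \<in> topspace X. f x \<in> Y closure_of V'}"
    proof
      fix x assume x: "x \<in> topspace X \<inter> f -` V'"
      have "f x \<in> topspace Y" using x continuous_map_image_subset_topspace[OF assms(5)] by blast
      then have "f x \<in> Y closure_of V'" using x closure_of_subset_Int[of Y V'] by auto
      then show "x \<in> {x \<in> topspace X. f x \<in> Y closure_of V'}" using x by blast
    qed
    then have "X closure_of (topspace X \<inter> f -` V') \<subseteq> {x \<in> topspace X. f x \<in> Y closure_of V'}"
      using C by (rule closure_of_minimal)
    moreover have "X closure_of U \<subseteq> X closure_of (topspace X \<inter> f -` V')"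
    proof -
      have "U \<subseteq> X closure_of (topspace X \<inter> f -` V')"
        using V'(2) interior_of_subset by (rule order_trans)
      then have "X closure_of U \<subseteq> X closure_of (X closure_of (topspace X \<inter> f -` V'))"
        by (rule closure_of_mono)
      then show ?thesis by simp
    qed
    ultimately have "X closure_of U \<subseteq> {x \<in> topspace X. f x \<in> Y closure_of V'}" by simp
    then show "f ` (X closure_of U) \<subseteq> V" using V'(1) by auto
  qed
qed

end
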